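(* Let $G$ be a regular graph whose line graph $L(G)$ has at least $3$ vertices. Then $\lambda_3(L(G)) < \frac{|V(L(G))|}{3}$.
   Context: The line graph $L(G)$ has the edges of $G$ as vertices, two being adjacent when they share an endpoint. $\lambda_3$ denotes the third largest eigenvalue (with multiplicity) of the adjacency matrix. *)

theory Defs
  imports "Jordan_Normal_Form.Char_Poly"
begin

definition simple_graph :: "'a set \<Rightarrow> 'a set set \<Rightarrow> bool" where
  "simple_graph V E \<longleftrightarrow> finite V \<and> (\<forall>e\<in>E. e \<subseteq> V \<and> card e = 2)"

definition degree :: "'a set set \<Rightarrow> 'a \<Rightarrow> nat" where
  "degree E v = card {e\<in>E. v \<in> e}"

definition regular_graph :: "'a set \<Rightarrow> 'a set set \<Rightarrow> bool" where
  "regular_graph V E \<longleftrightarrow> simple_graph V E \<and> (\<exists>k. \<forall>v\<in>V. degree E v = k)"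

definition line_adj :: "'a set \<Rightarrow> 'a set \<Rightarrow> bool" where
  "line_adj e f \<longleftrightarrow> e \<noteq> f \<and> e \<inter> f \<noteq> {}"

text \<open>Adjacency matrix of a graph (vertex set W, adjacency relation R), with respect to
some enumeration of W (the spectrum does not depend on the choice).\<close>
definition vertex_list :: "'b set \<Rightarrow> 'b list" where
  "vertex_list W = (SOME vs. distinct vs \<and> set vs = W)"

definition adj_matrix :: "'b set \<Rightarrow> ('b \<Rightarrow> 'b \<Rightarrow> bool) \<Rightarrow> real mat" where
  "adj_matrix W R = (let vs = vertex_list W in
     mat (length vs) (length vs) (\<lambda>(i,j). if R (vs ! i) (vs ! j) then 1 else 0))"

text \<open>Eigenvalues with multiplicity (roots of the characteristic polynomial),
listed in non-increasing order; lambda_k is the k-th entry (1-based).\<close>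
definition eigenvalues_desc :: "real mat \<Rightarrow> real list" where
  "eigenvalues_desc A = rev (sorted_list_of_multiset (proots (char_poly A)))"

definition graph_lambda :: "nat \<Rightarrow> 'b set \<Rightarrow> ('b \<Rightarrow> 'b \<Rightarrow> bool) \<Rightarrow> real" where
  "graph_lambda k W R = eigenvalues_desc (adj_matrix W R) ! (k - 1)"

end

theory Submission
  imports Defs "Jordan_Normal_Form.Schur_Decomposition"
begin


lemma herm_eigenvalue_real:
  fixes A :: "complex mat"
  assumes A: "A \<in> carrier_mat n n"
    and herm: "\<And>i j. i < n \<Longrightarrow> j < n \<Longrightarrow> A $$ (i,j) = cnj (A $$ (j,i))"
    and ev: "eigenvalue A a"
  shows "a = of_real (Re a)"
proof -
  from ev obtain v where v: "v \<in> carrier_vec n" "v \<noteq> 0\<^sub>v n" "A *\<^sub>v v = a \<cdot>\<^sub>v v"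
    unfolding eigenvalue_def eigenvector_def using A by auto
  have Av: "(A *\<^sub>v v) $ i = (\<Sum>j<n. A $$ (i,j) * v $ j)" if "i < n" for i
    using that A v(1) by (auto simp: scalar_prod_def atLeast0LessThan)
  define x where "x = (\<Sum>i<n. cnj (v $ i) * (A *\<^sub>v v) $ i)"
  define s where "s = (\<Sum>i<n. cnj (v $ i) * v $ i)"
  have xs: "x = a * s" unfolding x_def s_def using v
    by (auto simp: sum_distrib_left intro!: sum.cong)
  have x2: "x = (\<Sum>i<n. \<Sum>j<n. A $$ (i,j) * cnj (v $ i) * v $ j)"
    unfolding x_def by (auto simp: Av sum_distrib_left intro!: sum.cong)
  have "cnj x = (\<Sum>i<n. \<Sum>j<n. cnj (A $$ (i,j)) * v $ i * cnj (v $ j))"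
    unfolding x2 by (simp add: mult.commute mult.left_commute)
  also have "\<dots> = (\<Sum>i<n. \<Sum>j<n. A $$ (j,i) * v $ i * cnj (v $ j))"
    by (intro sum.cong refl, subst herm, auto)
  also have "\<dots> = x" unfolding x2 by (subst sum.swap) (simp add: mult.commute mult.left_commute)
  finally have cx: "cnj x = x" .
  define r where "r = (\<Sum>i<n. (Re (v $ i))\<^sup>2 + (Im (v $ i))\<^sup>2)"
  have sr: "s = of_real r"
    unfolding s_def r_def by (simp add: complex_mult_cnj mult.commute)
  obtain i where i: "i < n" "v $ i \<noteq> 0" using v
    by (metis carrier_vecD eq_vecI index_zero_vec(1) index_zero_vec(2))
  have "(Re (v $ i))\<^sup>2 + (Im (v $ i))\<^sup>2 > 0" using i(2)
    by (auto simp: sum_power2_gt_zero_iff complex_eq_iff)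
  hence "r > 0" unfolding r_def
    using i(1) by (intro sum_pos2[of "{..<n}" i]) auto
  hence s0: "s \<noteq> 0" using sr by simp
  have "cnj a * cnj s = a * s" using cx xs by simp
  moreover have "cnj s = s" unfolding sr by simp
  ultimately have "cnj a = a" using s0 by simp
  thus ?thesis by (metis Reals_cnj_iff of_real_Re)
qed

lemma real_sym_split:
  fixes A :: "real mat"
  assumes A: "A \<in> carrier_mat n n"
    and sym: "\<And>i j. i < n \<Longrightarrow> j < n \<Longrightarrow> A $$ (i,j) = A $$ (j,i)"
  shows "\<exists>rs. length rs = n \<and> char_poly A = (\<Prod>r\<leftarrow>rs. [:-r, 1:])"
proof -
  interpret m: map_poly_inj_comm_ring_hom "of_real :: real \<Rightarrow> complex" ..
  define Ac where "Ac = map_mat (of_real :: real \<Rightarrow> complex) A"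
  have Ac: "Ac \<in> carrier_mat n n" using A unfolding Ac_def by auto
  have cp: "char_poly Ac = map_poly of_real (char_poly A)"
    unfolding Ac_def by (rule of_real_hom.char_poly_hom[OF A])
  from char_poly_factorized[OF Ac] obtain as where
    as: "char_poly Ac = (\<Prod>a\<leftarrow>as. [:- a, 1:])" "length as = n" by auto
  have herm: "Ac $$ (i,j) = cnj (Ac $$ (j,i))" if "i < n" "j < n" for i j
    using that A sym unfolding Ac_def by auto
  have real: "a = of_real (Re a)" if "a \<in> set as" for a
  proof (rule herm_eigenvalue_real[OF Ac herm])
    show "eigenvalue Ac a" unfolding eigenvalue_root_char_poly[OF Ac] as(1)
      using that by (rule linear_poly_root)
  qed auto
  define rs where "rs = map Re as"
  have "map_poly of_real (\<Prod>r\<leftarrow>rs. [:-r, 1:]) = (\<Prod>r\<leftarrow>rs. map_poly (of_real :: real \<Rightarrow> complex) [:-r, 1:])"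
    by (simp add: m.hom_prod_list o_def)
  also have "\<dots> = (\<Prod>a\<leftarrow>as. [:- a, 1:])"
    unfolding rs_def map_map o_def
    by (rule arg_cong[where f=prod_list], rule map_cong, rule refl, subst (3) real, auto)
  also have "\<dots> = map_poly of_real (char_poly A)" using as cp by simp
  finally have "char_poly A = (\<Prod>r\<leftarrow>rs. [:-r, 1:])" by simp
  thus ?thesis using as(2) by (intro exI[of _ rs]) (auto simp: rs_def)
qed

definition mtrace :: "'a::comm_ring_1 mat \<Rightarrow> 'a" where
  "mtrace A = (\<Sum>i<dim_row A. A $$ (i,i))"

lemma mtrace_comm:
  assumes A: "A \<in> carrier_mat n m" and B: "B \<in> carrier_mat m n"
  shows "mtrace (A * B) = mtrace (B * A)"
proof -
  have "mtrace (A * B) = (\<Sum>i<n. \<Sum>j<m. A $$ (i,j) * B $$ (j,i))"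
    unfolding mtrace_def using A B by (auto simp: scalar_prod_def atLeast0LessThan intro!: sum.cong)
  also have "\<dots> = (\<Sum>j<m. \<Sum>i<n. B $$ (j,i) * A $$ (i,j))"
    by (subst sum.swap) (simp add: mult.commute)
  also have "\<dots> = mtrace (B * A)"
    unfolding mtrace_def using A B by (auto simp: scalar_prod_def atLeast0LessThan intro!: sum.cong)
  finally show ?thesis .
qed

lemma mtrace_similar:
  assumes X: "X \<in> carrier_mat n n" and P: "P \<in> carrier_mat n n" and Q: "Q \<in> carrier_mat n n"
    and QP: "Q * P = 1\<^sub>m n"
  shows "mtrace (P * X * Q) = mtrace X"
proof -
  have "mtrace (P * X * Q) = mtrace (Q * (P * X))"
    by (rule mtrace_comm[of _ n n], insert X P Q, auto)
  also have "Q * (P * X) = (Q * P) * X" using X P Q by (simp add: assoc_mult_mat)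
  also have "\<dots> = X" using QP X by simp
  finally show ?thesis .
qed

lemma upper_tri_sq_diag:
  fixes B :: "'a::comm_ring_1 mat"
  assumes B: "B \<in> carrier_mat n n" and ut: "upper_triangular B" and i: "i < n"
  shows "(B * B) $$ (i,i) = (B $$ (i,i))^2"
proof -
  have "(B * B) $$ (i,i) = (\<Sum>j<n. B $$ (i,j) * B $$ (j,i))"
    using B i by (auto simp: scalar_prod_def atLeast0LessThan)
  also have "\<dots> = (\<Sum>j<n. if j = i then (B $$ (i,i))^2 else 0)"
  proof (rule sum.cong[OF refl])
    fix j assume j: "j \<in> {..<n}"
    show "B $$ (i,j) * B $$ (j,i) = (if j = i then (B $$ (i,i))^2 else 0)"
    proof (cases "j < i")
      case True
      then have "B $$ (i,j) = 0" using ut B i by (intro upper_triangularD) auto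
      then show ?thesis using True by simp
    next
      case False
      show ?thesis
      proof (cases "j = i")
        case True then show ?thesis by (simp add: power2_eq_square)
      next
        case f2: False
        then have "B $$ (j,i) = 0" using False ut B j by auto
        then show ?thesis using f2 by simp
      qed
    qed
  qed
  also have "\<dots> = (B $$ (i,i))^2" using i by simp
  finally show ?thesis .
qed

lemma split_traces:
  fixes A :: "real mat"
  assumes A: "A \<in> carrier_mat n n"
    and cp: "char_poly A = (\<Prod>r\<leftarrow>rs. [:-r, 1:])"
  shows "mtrace A = sum_list rs" "mtrace (A * A) = sum_list (map (\<lambda>r. r^2) rs)"
proof -
  obtain B P Q where sd: "schur_decomposition A rs = (B,P,Q)" by (cases "schur_decomposition A rs") auto
  from schur_decomposition[OF A cp sd] have sim: "similar_mat_wit A B P Q"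
    and ut: "upper_triangular B" and dg: "diag_mat B = rs" by auto
  from similar_mat_witD2[OF A sim] have PQ: "P * Q = 1\<^sub>m n" "Q * P = 1\<^sub>m n" "A = P * B * Q"
    and B: "B \<in> carrier_mat n n" and P: "P \<in> carrier_mat n n" and Q: "Q \<in> carrier_mat n n" by auto
  have rs: "rs = map (\<lambda>i. B $$ (i,i)) [0..<n]" using dg B unfolding diag_mat_def by auto
  have "mtrace A = mtrace B" using PQ mtrace_similar[OF B P Q] by simp
  also have "\<dots> = sum_list rs" unfolding rs mtrace_def using B
    by (simp add: sum_list_distinct_conv_sum_set atLeast0LessThan)
  finally show "mtrace A = sum_list rs" .
  have "A * A = P * (B * B) * Q"
  proof -
    have "A * A = P * B * (Q * P) * B * Q" using PQ(3) P B Q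
      by (simp add: assoc_mult_mat[of _ n n _ n _ n])
    also have "\<dots> = P * (B * B) * Q" using PQ(2) P B Q
      by (simp add: assoc_mult_mat[of _ n n _ n _ n])
    finally show ?thesis .
  qed
  hence "mtrace (A * A) = mtrace (B * B)" using mtrace_similar[of "B*B" n P Q] B P Q PQ by simp
  also have "\<dots> = (\<Sum>i<n. (B $$ (i,i))^2)" unfolding mtrace_def using B
    using upper_tri_sq_diag[OF B ut] by (intro sum.cong) auto
  also have "\<dots> = sum_list (map (\<lambda>r. r^2) rs)" unfolding rs
    by (simp add: sum_list_distinct_conv_sum_set atLeast0LessThan o_def)
  finally show "mtrace (A * A) = sum_list (map (\<lambda>r. r^2) rs)" .
qed



lemma arith_final:
  fixes n k :: nat
  assumes k1: "1 \<le> k" and kn: "k < n"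
  shows "(2 * real k - 1)^2 + 2 * (real n * real k / 6 + 1)^2 > real n * real k / 2 * (2 * real k - 1)"
proof (cases "n \<ge> 12")
  case True
  define m where "m = real n * real k / 2"
  define b where "b = 2 * real k - 1"
  have "real n \<ge> 12" using True by simp
  hence "real n * real k \<ge> 12 * real k" using k1 by (intro mult_right_mono) auto
  hence bm: "b \<le> m / 3" unfolding b_def m_def by simp
  have m0: "m \<ge> 0" unfolding m_def by simp
  have "(b - m/3) * (b - 2*m/3) \<ge> 0" using bm m0 by (intro mult_nonpos_nonpos) auto
  moreover have "b^2 + 2 * (m/3 + 1)^2 - m * b = (b - m/3) * (b - 2*m/3) + 4*m/3 + 2"
    by (simp add: field_simps power2_eq_square)
  ultimately have "b^2 + 2 * (m/3 + 1)^2 > m * b" using m0 by linarith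
  moreover have "real n * real k / 2 * (2*real k - 1) = m * b" by (simp add: m_def b_def)
  moreover have "(2*real k - 1)^2 + 2*(real n * real k/6 + 1)^2 = b^2 + 2*(m/3+1)^2"
    by (simp add: m_def b_def)
  ultimately show ?thesis by linarith
next
  case False
  hence k12: "real k \<le> 12" using kn by simp
  define x where "x = real n"
  define y where "y = real k"
  have y1: "y \<ge> 1" and y12: "y \<le> 12" using k1 k12 unfolding y_def by auto
  define H where "H = 36*(2*y-1)^2 - 18*x*y*(2*y-1) + 2*x^2*y^2 + 24*x*y + 72"
  have id: "8*y^2*H = (4*y^2*x - (36*y^2-42*y))^2 + 36*y^2*(-(4*y^2-52*y+25))"
    unfolding H_def by (simp add: algebra_simps power2_eq_square)
  have "(y-1)*(y-12) \<le> 0" using y1 y12 by (intro mult_nonneg_nonpos) auto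
  hence "-(4*y^2-52*y+25) > 0" by (simp add: algebra_simps power2_eq_square)
  moreover have "y^2 > 0" using y1 by simp
  ultimately have "36*y^2*(-(4*y^2-52*y+25)) > 0" by simp
  hence "8*y^2*H > 0" unfolding id by (smt (verit) zero_le_power2)
  hence "H > 0" using \<open>y^2 > 0\<close> by (simp add: zero_less_mult_iff)
  hence "(2 * y - 1)^2 + 2 * (x * y / 6 + 1)^2 > x * y / 2 * (2 * y - 1)"
    unfolding H_def by (simp add: field_simps power2_eq_square)
  thus ?thesis unfolding x_def y_def .
qed



lemma third_bound:
  fixes rs :: "real list"
  assumes len: "length rs \<ge> 3" and a: "a \<in> set rs" and t: "t \<ge> 0"
    and L2: "rev (sort rs) ! 2 \<ge> t"
  shows "(a+1)^2 + 2*(t+1)^2 \<le> sum_list (map (\<lambda>r. (r+1)^2) rs)"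
proof -
  define L where "L = rev (sort rs)"
  define m where "m = length rs"
  define f where "f = (\<lambda>r::real. (r+1)^2)"
  have lenL: "length L = m" unfolding L_def m_def by simp
  have sumeq: "sum_list (map f L) = sum_list (map f rs)" unfolding L_def
    by (metis mset_map mset_rev mset_sort sum_mset_sum_list)
  have srt: "sorted (sort rs)" by simp
  have desc: "L ! j \<le> L ! i" if "i \<le> j" "j < m" for i j
  proof -
    have "L ! j = sort rs ! (m - Suc j)" "L ! i = sort rs ! (m - Suc i)"
      using that unfolding L_def m_def by (auto simp: rev_nth)
    moreover have "sort rs ! (m - Suc j) \<le> sort rs ! (m - Suc i)"
      using that by (intro sorted_nth_mono[OF srt]) (auto simp: m_def)
    ultimately show ?thesis by simp
  qed
  have ge: "L ! i \<ge> t" if "i \<le> 2" for i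
    using desc[of i 2] that len L2 unfolding L_def m_def by auto
  have "a \<in> set L" using a unfolding L_def by simp
  then obtain p where p: "p < m" "L ! p = a" using lenL by (auto simp: in_set_conv_nth)
  obtain q1 q2 where q: "q1 \<le> 2" "q2 \<le> 2" "q1 \<noteq> p" "q2 \<noteq> p" "q1 \<noteq> q2"
  proof (cases "p = 0")
    case True then show ?thesis using that[of 1 2] by auto
  next
    case False
    show ?thesis
    proof (cases "p = 1")
      case True then show ?thesis using that[of 0 2] by auto
    next
      case False then show ?thesis using \<open>p \<noteq> 0\<close> that[of 0 1] by auto
    qed
  qed
  have fq: "f (L ! q) \<ge> (t+1)^2" if "q \<le> 2" for q
    unfolding f_def using ge[OF that] t by (intro power_mono) auto
  have "f (L ! p) + f (L ! q1) + f (L ! q2) = (\<Sum>i\<in>{p,q1,q2}. f (L ! i))"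
    using q by simp
  also have "\<dots> \<le> (\<Sum>i\<in>{..<m}. f (L ! i))"
    using q p len unfolding m_def by (intro sum_mono2) (auto simp: f_def)
  also have "\<dots> = sum_list (map f L)"
    by (simp add: sum_list_sum_nth lenL atLeast0LessThan)
  finally have "f a + f (L ! q1) + f (L ! q2) \<le> sum_list (map f rs)" using p sumeq by simp
  moreover have "f (L ! q1) + f (L ! q2) \<ge> 2*(t+1)^2" using fq[OF q(1)] fq[OF q(2)] by linarith
  ultimately show ?thesis unfolding f_def by simp
qed



lemma card_filter_sum:
  assumes "finite A"
  shows "real (card {x\<in>A. P x}) = (\<Sum>x\<in>A. if P x then 1 else 0)"
proof -
  have "real (card {x\<in>A. P x}) = (\<Sum>x\<in>{x\<in>A. P x}. 1)" by simp
  also have "\<dots> = (\<Sum>x\<in>A. if P x then 1 else 0)" using assms by (rule sum.inter_filter)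
  finally show ?thesis .
qed

lemma line_deg:
  assumes sg: "simple_graph V E" and reg: "\<forall>v\<in>V. degree E v = k"
    and fin: "finite E" and e: "e \<in> E"
  shows "card {f\<in>E. line_adj e f} = 2*k - 2" "k \<ge> 1"
proof -
  have e2: "card e = 2" "e \<subseteq> V" using sg e unfolding simple_graph_def by auto
  then obtain u v where uv: "e = {u,v}" "u \<noteq> v" by (auto simp: card_2_iff)
  have uV: "u \<in> V" and vV: "v \<in> V" using e2 uv by auto
  define X where "X = {f\<in>E. u \<in> f}"
  define Y where "Y = {f\<in>E. v \<in> f}"
  have cX: "card X = k" using reg uV unfolding X_def degree_def by auto
  have cY: "card Y = k" using reg vV unfolding Y_def degree_def by auto
  have XY: "X \<inter> Y = {e}"
  proof
    show "{e} \<subseteq> X \<inter> Y" using e uv unfolding X_def Y_def by auto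
    show "X \<inter> Y \<subseteq> {e}"
    proof
      fix f assume f: "f \<in> X \<inter> Y"
      hence fE: "f \<in> E" and uvf: "{u,v} \<subseteq> f" unfolding X_def Y_def by auto
      have "card f = 2" using sg fE unfolding simple_graph_def by auto
      hence "finite f" by (metis card.infinite zero_neq_numeral)
      hence "{u,v} = f" using uvf \<open>card f = 2\<close> uv by (intro card_subset_eq) auto
      thus "f \<in> {e}" using uv by auto
    qed
  qed
  have finX: "finite X" "finite Y" using fin unfolding X_def Y_def by auto
  have "card X + card Y = card (X \<union> Y) + card (X \<inter> Y)" using finX by (rule card_Un_Int)
  hence cU: "card (X \<union> Y) = 2*k - 1" using cX cY XY by simp
  have eq: "{f\<in>E. line_adj e f} = (X \<union> Y) - {e}"
    unfolding X_def Y_def line_adj_def uv by auto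
  have "e \<in> X" using e uv unfolding X_def by auto
  hence "card X \<noteq> 0" using finX by auto
  thus "k \<ge> 1" using cX by simp
  have "card ((X \<union> Y) - {e}) = card (X \<union> Y) - 1" using \<open>e \<in> X\<close> finX by simp
  thus "card {f\<in>E. line_adj e f} = 2*k - 2" unfolding eq cU by simp
qed

lemma handshake:
  assumes sg: "simple_graph V E" and reg: "\<forall>v\<in>V. degree E v = k"
  shows "card V * k = 2 * card E"
proof -
  have finV: "finite V" using sg unfolding simple_graph_def by auto
  have "E \<subseteq> Pow V" using sg unfolding simple_graph_def by auto
  hence finE: "finite E" using finV by (meson finite_Pow_iff finite_subset)
  have "card V * k = (\<Sum>v\<in>V. degree E v)" using reg by simp
  also have "\<dots> = (\<Sum>v\<in>V. \<Sum>e\<in>E. if v \<in> e then 1 else 0)"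
    unfolding degree_def using finE by (intro sum.cong refl) (simp add: sum.inter_filter[symmetric])
  also have "\<dots> = (\<Sum>e\<in>E. \<Sum>v\<in>V. if v \<in> e then 1 else 0)" by (rule sum.swap)
  also have "\<dots> = (\<Sum>e\<in>E. 2)"
  proof (intro sum.cong refl)
    fix e assume e: "e \<in> E"
    have "(\<Sum>v\<in>V. if v \<in> e then 1 else (0::nat)) = card {v\<in>V. v \<in> e}"
      using finV by (simp add: sum.inter_filter[symmetric])
    also have "{v\<in>V. v \<in> e} = e" using sg e unfolding simple_graph_def by auto
    also have "card e = 2" using sg e unfolding simple_graph_def by auto
    finally show "(\<Sum>v\<in>V. if v \<in> e then 1 else (0::nat)) = 2" .
  qed
  also have "\<dots> = 2 * card E" by simp
  finally show ?thesis .
qed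

lemma deg_lt:
  assumes sg: "simple_graph V E" and reg: "\<forall>v\<in>V. degree E v = k" and v: "v \<in> V"
  shows "k < card V"
proof -
  have finV: "finite V" using sg unfolding simple_graph_def by auto
  define S where "S = {e\<in>E. v \<in> e}"
  have cS: "card S = k" using reg v unfolding S_def degree_def by auto
  have inj: "inj_on (\<lambda>e. e - {v}) S"
  proof (rule inj_onI)
    fix x y assume xy: "x \<in> S" "y \<in> S" "x - {v} = y - {v}"
    then have "v \<in> x" "v \<in> y" by (auto simp: S_def)
    then show "x = y" using xy(3) by (metis insert_Diff)
  qed
  have img: "(\<lambda>e. e - {v}) ` S \<subseteq> (\<lambda>w. {w}) ` (V - {v})"
  proof
    fix x assume "x \<in> (\<lambda>e. e - {v}) ` S"
    then obtain e where e: "e \<in> E" "v \<in> e" "x = e - {v}" unfolding S_def by auto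
    have "card e = 2" "e \<subseteq> V" using sg e(1) unfolding simple_graph_def by auto
    moreover have "finite e" using \<open>card e = 2\<close> card.infinite by fastforce
    ultimately have "card x = 1" using e by (simp add: card_Diff_singleton)
    then obtain w where w: "x = {w}" by (auto simp: card_1_singleton_iff)
    have "w \<in> V - {v}" using w e \<open>e \<subseteq> V\<close> by auto
    thus "x \<in> (\<lambda>w. {w}) ` (V - {v})" using w by auto
  qed
  have "k = card ((\<lambda>e. e - {v}) ` S)" using cS card_image[OF inj] by simp
  also have "\<dots> \<le> card ((\<lambda>w. {w}) ` (V - {v}))" using img finV by (intro card_mono) auto
  also have "\<dots> \<le> card (V - {v})" by (rule card_image_le) (use finV in auto)
  also have "\<dots> < card V" using finV v by (meson card_Diff1_less)
  finally show ?thesis .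
qed

lemma mset_linear_prod: "proots (\<Prod>r\<leftarrow>rs. [:-r, 1:]) = mset (rs :: real list)"
proof (induction rs)
  case (Cons a rs)
  have nz: "(\<Prod>r\<leftarrow>rs. [:-r, 1:]) \<noteq> (0::real poly)" by (auto simp: prod_list_zero_iff)
  have "proots (\<Prod>r\<leftarrow>a#rs. [:-r, 1:]) = proots [:-a, 1:] + proots (\<Prod>r\<leftarrow>rs. [:-r, 1:])"
    using nz by (simp only: list.map prod_list.Cons, intro proots_mult) auto
  also have "proots [:-a, 1:] = {#a#}" using proots_linear_factor[of "-a"] by simp
  finally show ?case using Cons by simp
qed simp

lemma sum_sq_shift: "sum_list (map (\<lambda>r. (r+1)^2) rs) =
   sum_list (map (\<lambda>r. r^2) rs) + 2 * sum_list rs + real (length rs)"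
  by (induction rs) (auto simp: algebra_simps power2_eq_square)


theorem theorem3p3:
  fixes V :: "'a set" and E :: "'a set set"
  assumes "regular_graph V E"
    and "card E \<ge> 3"
  shows "graph_lambda 3 E line_adj < real (card E) / 3"
proof (rule ccontr)
  assume neg: "\<not> graph_lambda 3 E line_adj < real (card E) / 3"
  from assms(1) obtain k where sg: "simple_graph V E" and reg: "\<forall>v\<in>V. degree E v = k"
    unfolding regular_graph_def by auto
  have finE: "finite E" using assms(2) by (metis card.infinite not_numeral_le_zero)
  obtain e0 where e0: "e0 \<in> E" using assms(2) by fastforce
  have k1: "k \<ge> 1" using line_deg[OF sg reg finE e0] by simp
  have "card e0 = 2" "e0 \<subseteq> V" using sg e0 unfolding simple_graph_def by auto
  then obtain v0 where v0: "v0 \<in> V" by (metis card.empty ex_in_conv subset_iff zero_neq_numeral)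
  have kn: "k < card V" by (rule deg_lt[OF sg reg v0])
  have hs: "card V * k = 2 * card E" by (rule handshake[OF sg reg])
  define vs where "vs = vertex_list E"
  have vs: "distinct vs \<and> set vs = E" unfolding vs_def vertex_list_def
    by (rule someI_ex) (use finite_distinct_list[OF finE] in blast)
  define m where "m = card E"
  have lvs: "length vs = m" using vs distinct_card unfolding m_def by fastforce
  define A where "A = adj_matrix E line_adj"
  have Adef: "A = mat m m (\<lambda>(i,j). if line_adj (vs ! i) (vs ! j) then 1 else 0)"
    unfolding A_def adj_matrix_def Let_def vs_def[symmetric] lvs ..
  have A: "A \<in> carrier_mat m m" unfolding Adef by simp
  have Aij: "A $$ (i,j) = (if line_adj (vs ! i) (vs ! j) then 1 else 0)" if "i < m" "j < m" for i j
    using that unfolding Adef by simp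
  have sym: "A $$ (i,j) = A $$ (j,i)" if "i < m" "j < m" for i j
    using that Aij unfolding line_adj_def by (auto simp: Int_commute)
  have vsE: "vs ! i \<in> E" if "i < m" for i using that vs lvs nth_mem by fastforce
  have rowsum: "(\<Sum>j<m. A $$ (i,j)) = 2 * real k - 2" if i: "i < m" for i
  proof -
    have "(\<Sum>j<m. A $$ (i,j)) = (\<Sum>j<m. (\<lambda>f. if line_adj (vs ! i) f then 1 else 0) (vs ! j))"
      using Aij i by simp
    also have "\<dots> = sum_list (map (\<lambda>f. if line_adj (vs ! i) f then 1 else 0) vs)"
      by (simp add: sum_list_sum_nth lvs atLeast0LessThan)
    also have "\<dots> = (\<Sum>f\<in>E. if line_adj (vs ! i) f then 1 else 0)"
      using vs by (simp add: sum_list_distinct_conv_sum_set)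
    also have "\<dots> = real (card {f\<in>E. line_adj (vs ! i) f})"
      using card_filter_sum[OF finE] by simp
    also have "\<dots> = real (2*k - 2)" using line_deg[OF sg reg finE vsE[OF i]] by simp
    also have "\<dots> = 2 * real k - 2" using k1 by (simp add: of_nat_diff)
    finally show ?thesis .
  qed
  have m3: "m \<ge> 3" using assms(2) unfolding m_def .
  have ev: "eigenvalue A (2 * real k - 2)"
    unfolding eigenvalue_def eigenvector_def
  proof (intro exI[of _ "vec m (\<lambda>_. 1::real)"] conjI)
    show "vec m (\<lambda>_. 1::real) \<in> carrier_vec (dim_row A)" using A by simp
    show "vec m (\<lambda>_. 1::real) \<noteq> 0\<^sub>v (dim_row A)"
    proof
      assume eq: "vec m (\<lambda>_. 1::real) = 0\<^sub>v (dim_row A)"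
      have m0: "0 < m" using m3 by simp
      have "dim_row A = m" using A by simp
      hence "vec m (\<lambda>_. 1::real) $ 0 = (0\<^sub>v m :: real vec) $ 0" using eq by (simp only:)
      thus False using m0 by simp
    qed
    show "A *\<^sub>v vec m (\<lambda>_. 1::real) = (2 * real k - 2) \<cdot>\<^sub>v vec m (\<lambda>_. 1::real)"
      using A rowsum by (auto simp: scalar_prod_def atLeast0LessThan intro!: eq_vecI)
  qed
  have tr0: "mtrace A = 0" unfolding mtrace_def using A Aij by (simp add: line_adj_def)
  have tr2: "mtrace (A * A) = real m * (2 * real k - 2)"
  proof -
    have "mtrace (A * A) = (\<Sum>i<m. \<Sum>j<m. A $$ (i,j) * A $$ (j,i))"
      unfolding mtrace_def using A by (auto simp: scalar_prod_def atLeast0LessThan intro!: sum.cong)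
    also have "\<dots> = (\<Sum>i<m. \<Sum>j<m. A $$ (i,j))"
      using sym Aij by (intro sum.cong refl) auto
    also have "\<dots> = (\<Sum>i<m. 2 * real k - 2)" using rowsum by simp
    finally show ?thesis by simp
  qed
  obtain rs where rs: "length rs = m" "char_poly A = (\<Prod>r\<leftarrow>rs. [:-r, 1:])"
    using real_sym_split[OF A sym] by blast
  have s1: "sum_list rs = 0" using split_traces(1)[OF A rs(2)] tr0 by simp
  have s2: "sum_list (map (\<lambda>r. r^2) rs) = real m * (2 * real k - 2)"
    using split_traces(2)[OF A rs(2)] tr2 by simp
  have "poly (char_poly A) (2 * real k - 2) = 0" using ev eigenvalue_root_char_poly[OF A] by simp
  hence aset: "2 * real k - 2 \<in> set rs" unfolding rs(2) poly_prod_list_zero_iff by auto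
  have "graph_lambda 3 E line_adj = rev (sort rs) ! 2"
    unfolding graph_lambda_def eigenvalues_desc_def A_def[symmetric] rs(2) mset_linear_prod
    by simp
  hence L2: "rev (sort rs) ! 2 \<ge> real m / 3" using neg unfolding m_def by simp
  have "(2 * real k - 2 + 1)^2 + 2 * (real m / 3 + 1)^2 \<le> sum_list (map (\<lambda>r. (r+1)^2) rs)"
    by (rule third_bound[OF _ aset _ L2]) (use rs(1) m3 in auto)
  also have "\<dots> = real m * (2 * real k - 1)" unfolding sum_sq_shift s1 s2 rs(1) by (simp add: algebra_simps)
  finally have le: "(2 * real k - 1)^2 + 2 * (real m / 3 + 1)^2 \<le> real m * (2 * real k - 1)" by simp
  have "real (card V * k) = real (2 * card E)" using hs by (rule arg_cong)
  hence "real (card V) * real k = 2 * real m" unfolding m_def by simp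
  hence mnk: "real m = real (card V) * real k / 2" by simp
  have "real m / 3 = real (card V) * real k / 6" unfolding mnk by simp
  hence "(2 * real k - 1)^2 + 2 * (real (card V) * real k / 6 + 1)^2 \<le> real (card V) * real k / 2 * (2 * real k - 1)"
    using le unfolding mnk by simp
  thus False using arith_final[OF k1 kn] by simp
qed

end
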